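(* Let $\ell,\tilde\ell\in\mathcal{D}^-[0,\infty)$ and $r,\tilde r\in\mathcal{D}^+[0,\infty)$ with $\tilde\ell=\ell$, $r\le\tilde r$ and $\inf_{t\ge0}(r(t)-\ell(t))>0$. Given $\psi\in\mathcal{D}[0,\infty)$, let $(\eta_\ell,\eta_r)$ and $(\eta_{\tilde\ell},\eta_{\tilde r})$ be the constraining processes associated with the SP for $\psi$ on $[\ell(\cdot),r(\cdot)]$ and on $[\tilde\ell(\cdot),\tilde r(\cdot)]$, respectively. Then for every $t\ge0$, $\eta_r(t)\ge\eta_{\tilde r}(t)$ and $\eta_\ell(t)\ge\eta_{\tilde\ell}(t)$.
   Context: $\mathcal{D}[0,\infty)$ denotes the càdlàg functions $[0,\infty)\to(-\infty,\infty)$; $\mathcal{D}^-[0,\infty)$ (resp. $\mathcal{D}^+[0,\infty)$) denotes càdlàg functions with values in $[-\infty,\infty)$ (resp. $(-\infty,\infty]$). SP: $(\phi,\eta)\in\mathcal{D}[0,\infty)^2$ solves the SP on $[\ell(\cdot),r(\cdot)]$ for $\psi$ if (1) $\phi(t)=\psi(t)+\eta(t)\in[\ell(t),r(t)]$ for all $t\ge0$; (2) $\eta=\eta_\ell-\eta_r$ with $\eta_\ell,\eta_r$ non-decreasing and $\int_0^\infty \mathbb{I}_{\{\phi(s)>\ell(s)\}}\,d\eta_\ell(s)=0$, $\int_0^\infty \mathbb{I}_{\{\phi(s)<r(s)\}}\,d\eta_r(s)=0$. The pair $(\eta_\ell,\eta_r)$ is called the pair of constraining processes associated with the SP. When $\inf_t(r(t)-\ell(t))>0$,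 the SP has a unique solution for every $\psi\in\mathcal{D}[0,\infty)$. *)

theory Defs
  imports "HOL-Analysis.Analysis"
begin

definition cadlag_in :: "'a::topological_space set \<Rightarrow> (real \<Rightarrow> 'a) \<Rightarrow> bool" where
  "cadlag_in S f \<longleftrightarrow>
     (\<forall>t\<ge>0. f t \<in> S) \<and>
     (\<forall>t\<ge>0. continuous (at_right t) f) \<and>
     (\<forall>t>0. \<exists>L\<in>S. (f \<longlongrightarrow> L) (at_left t))"

definition D :: "(real \<Rightarrow> real) \<Rightarrow> bool" where
  "D f \<longleftrightarrow> cadlag_in UNIV f"

definition D_minus :: "(real \<Rightarrow> ereal) \<Rightarrow> bool" where
  "D_minus f \<longleftrightarrow> cadlag_in (UNIV - {\<infinity>}) f"

definition D_plus :: "(real \<Rightarrow> ereal) \<Rightarrow> bool" where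
  "D_plus f \<longleftrightarrow> cadlag_in (UNIV - {-\<infinity>}) f"

text \<open>Lebesgue-Stieltjes measure d\<eta> on [0,\<infinity>) of a nondecreasing cadlag \<eta>, with the
  convention \<eta>(0-) = 0 (so \<eta>(0) is an atom at 0).\<close>
definition LS_measure :: "(real \<Rightarrow> real) \<Rightarrow> real measure" where
  "LS_measure \<eta> = interval_measure (\<lambda>s. if s < 0 then 0 else \<eta> s)"

definition SP_sol ::
  "(real \<Rightarrow> ereal) \<Rightarrow> (real \<Rightarrow> ereal) \<Rightarrow> (real \<Rightarrow> real) \<Rightarrow>
   (real \<Rightarrow> real) \<Rightarrow> (real \<Rightarrow> real) \<Rightarrow> (real \<Rightarrow> real) \<Rightarrow> (real \<Rightarrow> real) \<Rightarrow> bool" where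
  "SP_sol l r \<psi> \<phi> \<eta> \<eta>l \<eta>r \<longleftrightarrow>
     D \<phi> \<and> D \<eta> \<and> D \<eta>l \<and> D \<eta>r \<and>
     (\<forall>t\<ge>0. \<phi> t = \<psi> t + \<eta> t \<and> l t \<le> ereal (\<phi> t) \<and> ereal (\<phi> t) \<le> r t) \<and>
     (\<forall>t\<ge>0. \<eta> t = \<eta>l t - \<eta>r t) \<and>
     mono_on {0..} \<eta>l \<and> mono_on {0..} \<eta>r \<and> 0 \<le> \<eta>l 0 \<and> 0 \<le> \<eta>r 0 \<and>
     (\<integral>\<^sup>+ s. indicator {s. 0 \<le> s \<and> ereal (\<phi> s) > l s} s \<partial>LS_measure \<eta>l) = 0 \<and>
     (\<integral>\<^sup>+ s. indicator {s. 0 \<le> s \<and> ereal (\<phi> s) < r s} s \<partial>LS_measure \<eta>r) = 0"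

end

theory Submission
  imports Defs
begin

definition ext0 :: "(real \<Rightarrow> real) \<Rightarrow> real \<Rightarrow> real" where
  "ext0 f s = (if s < 0 then 0 else f s)"

definition flat :: "(real \<Rightarrow> real) \<Rightarrow> (real \<Rightarrow> bool) \<Rightarrow> bool" where
  "flat F P \<longleftrightarrow> (\<forall>x y. x \<le> y \<longrightarrow> (\<forall>s\<in>{x<..y}. P s) \<longrightarrow> F y \<le> F x) \<and>
     (\<forall>x y e. x \<le> y \<longrightarrow> (\<forall>s\<in>{x..y}. P s) \<longrightarrow> e > 0 \<longrightarrow> (\<exists>z<x. F y - F z < e))"

lemma flat_add:
  assumes "flat F P" "flat G Q" "\<And>x y. x \<le> y \<Longrightarrow> F x \<le> F y" "\<And>x y. x \<le> y \<Longrightarrow> G x \<le> G y"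
  shows "flat (\<lambda>s. F s + G s) (\<lambda>s. P s \<and> Q s)"
  unfolding flat_def
proof (intro conjI allI impI)
  fix x y assume "x \<le> y" "\<forall>s\<in>{x<..y}. P s \<and> Q s"
  then show "F y + G y \<le> F x + G x" using assms(1,2) unfolding flat_def
    by (meson add_mono)
next
  fix x y e :: real assume h: "x \<le> y" "\<forall>s\<in>{x..y}. P s \<and> Q s" "0 < e"
  obtain z1 where z1: "z1 < x" "F y - F z1 < e/2" using assms(1) h unfolding flat_def
    by (metis half_gt_zero)
  obtain z2 where z2: "z2 < x" "G y - G z2 < e/2" using assms(2) h unfolding flat_def
    by (metis half_gt_zero)
  have "F z1 \<le> F (max z1 z2)" "G z2 \<le> G (max z1 z2)" using assms(3,4) by auto
  then show "\<exists>z<x. F y + G y - (F z + G z) < e"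
    using z1 z2 by (intro exI[of _ "max z1 z2"]) auto
qed

lemma suparg:
  assumes fl: "flat F P" and monoF: "\<And>x y. x \<le> y \<Longrightarrow> F x \<le> F y"
    and incr: "\<And>x y. x \<le> y \<Longrightarrow> G x - G y \<le> F y - F x"
    and x0: "x0 \<le> t" "G x0 \<ge> 0" and Gt: "G t < 0"
  shows "\<exists>s. x0 \<le> s \<and> s \<le> t \<and> G s < 0 \<and> \<not> P s"
proof (rule ccontr)
  assume H: "\<not> ?thesis"
  define S where "S = {s. x0 \<le> s \<and> s \<le> t \<and> 0 \<le> G s}"
  define u where "u = Sup S"
  have x0S: "x0 \<in> S" using x0 by (simp add: S_def)
  have bdd: "bdd_above S" unfolding S_def by (rule bdd_aboveI[of _ t]) auto
  have u1: "x0 \<le> u" unfolding u_def using x0S bdd by (rule cSup_upper)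
  have u2: "u \<le> t" unfolding u_def using x0S by (intro cSup_least) (auto simp: S_def)
  have out: "G s < 0" if "u < s" "s \<le> t" for s
  proof (rule ccontr)
    assume "\<not> G s < 0"
    then have "s \<in> S" using that u1 by (simp add: S_def)
    then have "s \<le> u" unfolding u_def using bdd by (rule cSup_upper)
    then show False using that by simp
  qed
  have P1: "\<forall>s\<in>{u<..t}. P s" using H out u1 by fastforce
  show False
  proof (cases "G u \<ge> 0")
    case True
    have "F t \<le> F u" using fl P1 u2 unfolding flat_def by blast
    then show False using incr[OF u2] True Gt by linarith
  next
    case False
    have "\<forall>s\<in>{u..t}. P s" using P1 H False u1 by (metis atLeastAtMost_iff greaterThanAtMost_iff le_less not_le)
    then obtain z where z: "z < u" "F t - F z < - G t" using fl u2 Gt unfolding flat_def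
      by (metis neg_0_less_iff_less)
    then obtain s where s: "s \<in> S" "z < s" using less_cSup_iff[of S z] x0S bdd unfolding u_def
      by blast
    have "s \<le> t" "0 \<le> G s" using s by (auto simp: S_def)
    have "F z \<le> F s" using monoF s(2) by simp
    then show False using incr[OF \<open>s \<le> t\<close>] \<open>0 \<le> G s\<close> z by linarith
  qed
qed

lemma ext_mono:
  assumes "mono_on {0..} f" "0 \<le> f 0" "x \<le> y"
  shows "ext0 f x \<le> ext0 f y"
  using assms unfolding ext0_def mono_on_def
  by (smt (verit, best) atLeast_iff)

lemma ext_rc:
  assumes "D f"
  shows "continuous (at_right a) (ext0 f)"
proof (cases "a < 0")
  case True
  have "\<forall>\<^sub>F s in at_right a. ext0 f s = 0"
    using True unfolding eventually_at_right_field
    by (intro exI[of _ 0]) (auto simp: ext0_def)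
  then have "(ext0 f \<longlongrightarrow> 0) (at_right a)" by (rule tendsto_eventually)
  then show ?thesis using True unfolding continuous_within by (simp add: ext0_def)
next
  case False
  then have c: "continuous (at_right a) f" using assms unfolding D_def cadlag_in_def by auto
  have ev: "\<forall>\<^sub>F s in at_right a. f s = ext0 f s"
    using False unfolding eventually_at_right_field
    by (intro exI[of _ "a+1"]) (auto simp: ext0_def)
  have "(f \<longlongrightarrow> f a) (at_right a)" using c unfolding continuous_within by simp
  then have "(ext0 f \<longlongrightarrow> f a) (at_right a)" using ev by (rule Lim_transform_eventually)
  then show ?thesis using False unfolding continuous_within by (simp add: ext0_def)
qed

lemma ext_flat:
  assumes "D f" "mono_on {0..} f" "0 \<le> f 0"
    and zero: "(\<integral>\<^sup>+ s. indicator Q s \<partial>LS_measure f) = 0"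
  shows "flat (ext0 f) (\<lambda>s. s \<in> Q)"
proof -
  let ?F = "ext0 f"
  let ?M = "interval_measure ?F"
  have LS: "LS_measure f = ?M" unfolding LS_measure_def ext0_def by (simp add: fun_eq_iff)
  have mono: "\<And>x y. x \<le> y \<Longrightarrow> ?F x \<le> ?F y" using ext_mono assms by blast
  have rc: "\<And>a. continuous (at_right a) ?F" using ext_rc assms by blast
  have sub0: "emeasure ?M A = 0" if "A \<in> sets ?M" "A \<subseteq> Q" for A
  proof -
    have "emeasure ?M A = (\<integral>\<^sup>+ s. indicator A s \<partial>?M)" using that by simp
    also have "\<dots> \<le> (\<integral>\<^sup>+ s. indicator Q s \<partial>?M)"
      by (intro nn_integral_mono) (use that in \<open>auto split: split_indicator\<close>)
    also have "\<dots> = 0" using zero LS by simp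
    finally show ?thesis by simp
  qed
  show ?thesis unfolding flat_def
  proof (intro conjI allI impI)
    fix x y assume h: "x \<le> y" "\<forall>s\<in>{x<..y}. s \<in> Q"
    have "emeasure ?M {x<..y} = 0" using h by (intro sub0) auto
    then have "ennreal (?F y - ?F x) = 0" using emeasure_interval_measure_Ioc[OF h(1) mono rc] by simp
    then show "?F y \<le> ?F x" by (simp add: ennreal_eq_0_iff)
  next
    fix x y e :: real assume h: "x \<le> y" "\<forall>s\<in>{x..y}. s \<in> Q" "0 < e"
    define A where "A n = {x - 1 / Suc n<..y}" for n :: nat
    have A_int: "(\<Inter>n. A n) = {x..y}"
    proof (intro equalityI subsetI)
      fix s assume "s \<in> (\<Inter>n. A n)"
      then have s: "\<And>n. x - 1 / Suc n < s" "s \<le> y" by (auto simp: A_def)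
      have "x \<le> s"
      proof (rule ccontr)
        assume "\<not> x \<le> s"
        then obtain n where "1 / Suc n < x - s" using nat_approx_posE by (metis diff_gt_0_iff_gt not_le)
        then show False using s(1)[of n] by linarith
      qed
      then show "s \<in> {x..y}" using s by simp
    next
      fix s assume "s \<in> {x..y}" then show "s \<in> (\<Inter>n. A n)"
        by (auto simp: A_def) (smt (verit) of_nat_0_le_iff divide_pos_pos of_nat_Suc)
    qed
    have dec: "decseq A"
    proof (rule decseq_SucI)
      fix n
      have "1 / real (Suc (Suc n)) \<le> 1 / real (Suc n)" by (intro divide_left_mono) auto
      then show "A (Suc n) \<subseteq> A n" unfolding A_def by auto
    qed
    have meas: "\<And>n. A n \<in> sets ?M" by (simp add: A_def)
    have Ae: "emeasure ?M (A n) = ?F y - ?F (x - 1 / Suc n)" for n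
      unfolding A_def using h(1) by (intro emeasure_interval_measure_Ioc[OF _ mono rc]) (smt (verit) of_nat_0_le_iff divide_pos_pos of_nat_Suc)
    have "(INF n. emeasure ?M (A n)) = emeasure ?M (\<Inter>n. A n)"
      using meas dec by (intro INF_emeasure_decseq) (auto simp: Ae)
    also have "\<dots> = 0" using h A_int by (intro sub0) auto
    finally have "(INF n. emeasure ?M (A n)) < ennreal e" using h(3) by simp
    then obtain n where "emeasure ?M (A n) < ennreal e" by (auto simp: INF_less_iff)
    then have "ennreal (?F y - ?F (x - 1 / Suc n)) < ennreal e" by (simp add: Ae)
    then have "?F y - ?F (x - 1 / Suc n) < e" using h(3)
      by (cases "0 \<le> ?F y - ?F (x - 1 / Suc n)") (simp_all add: ennreal_less_iff)
    moreover have "x - 1 / Suc n < x" by simp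
    ultimately show "\<exists>z<x. ?F y - ?F z < e" by blast
  qed
qed

theorem lemma3p1:
  fixes l lt r rt :: "real \<Rightarrow> ereal" and \<psi> \<phi> \<eta> \<eta>l \<eta>r \<phi>t \<eta>t \<eta>lt \<eta>rt :: "real \<Rightarrow> real"
  assumes "D_minus l" and "D_minus lt" and "D_plus r" and "D_plus rt"
    and "\<forall>t\<ge>0. lt t = l t"
    and "\<forall>t\<ge>0. r t \<le> rt t"
    and "(INF t\<in>{0..}. r t - l t) > 0"
    and "D \<psi>"
    and "SP_sol l r \<psi> \<phi> \<eta> \<eta>l \<eta>r"
    and "SP_sol lt rt \<psi> \<phi>t \<eta>t \<eta>lt \<eta>rt"
  shows "\<forall>t\<ge>0. \<eta>r t \<ge> \<eta>rt t \<and> \<eta>l t \<ge> \<eta>lt t"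
proof -
  note S1 = assms(9)[unfolded SP_sol_def] and S2 = assms(10)[unfolded SP_sol_def]
  have eqs: "\<And>s. 0 \<le> s \<Longrightarrow> \<phi> s = \<psi> s + \<eta>l s - \<eta>r s" using S1 by auto
  have eqst: "\<And>s. 0 \<le> s \<Longrightarrow> \<phi>t s = \<psi> s + \<eta>lt s - \<eta>rt s" using S2 by auto
  have bnd: "\<And>s. 0 \<le> s \<Longrightarrow> l s \<le> ereal (\<phi> s) \<and> ereal (\<phi> s) \<le> r s" using S1 by auto
  have bndt: "\<And>s. 0 \<le> s \<Longrightarrow> lt s \<le> ereal (\<phi>t s) \<and> ereal (\<phi>t s) \<le> rt s" using S2 by auto
  have ltl: "\<And>s. 0 \<le> s \<Longrightarrow> lt s = l s" and rrt: "\<And>s. 0 \<le> s \<Longrightarrow> r s \<le> rt s" using assms(5,6) by auto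
  define hl where "hl = ext0 \<eta>l"
  define hr where "hr = ext0 \<eta>r"
  define hlt where "hlt = ext0 \<eta>lt"
  define hrt where "hrt = ext0 \<eta>rt"
  have mhl: "\<And>x y. x \<le> y \<Longrightarrow> hl x \<le> hl y" unfolding hl_def using S1 by (intro ext_mono) auto
  have mhr: "\<And>x y. x \<le> y \<Longrightarrow> hr x \<le> hr y" unfolding hr_def using S1 by (intro ext_mono) auto
  have mhlt: "\<And>x y. x \<le> y \<Longrightarrow> hlt x \<le> hlt y" unfolding hlt_def using S2 by (intro ext_mono) auto
  have mhrt: "\<And>x y. x \<le> y \<Longrightarrow> hrt x \<le> hrt y" unfolding hrt_def using S2 by (intro ext_mono) auto
  have fhl: "flat hl (\<lambda>s. s \<in> {s. 0 \<le> s \<and> ereal (\<phi> s) > l s})"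
    unfolding hl_def using S1 by (intro ext_flat) auto
  have fhr: "flat hr (\<lambda>s. s \<in> {s. 0 \<le> s \<and> ereal (\<phi> s) < r s})"
    unfolding hr_def using S1 by (intro ext_flat) auto
  have fhlt: "flat hlt (\<lambda>s. s \<in> {s. 0 \<le> s \<and> ereal (\<phi>t s) > lt s})"
    unfolding hlt_def using S2 by (intro ext_flat) auto
  have fhrt: "flat hrt (\<lambda>s. s \<in> {s. 0 \<le> s \<and> ereal (\<phi>t s) < rt s})"
    unfolding hrt_def using S2 by (intro ext_flat) auto
  have neg: "\<And>s. s < 0 \<Longrightarrow> hl s = 0 \<and> hr s = 0 \<and> hlt s = 0 \<and> hrt s = 0"
    by (simp add: hl_def hr_def hlt_def hrt_def ext0_def)
  have pos: "\<And>s. 0 \<le> s \<Longrightarrow> hl s = \<eta>l s \<and> hr s = \<eta>r s \<and> hlt s = \<eta>lt s \<and> hrt s = \<eta>rt s"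
    by (simp add: hl_def hr_def hlt_def hrt_def ext0_def)

  have X: "\<phi> s \<le> \<phi>t s" if "0 \<le> s" for s
  proof (rule ccontr)
    assume "\<not> \<phi> s \<le> \<phi>t s"
    define G where "G x = hlt x - hrt x - hl x + hr x" for x
    have fl: "flat (\<lambda>x. hrt x + hl x) (\<lambda>x. x \<in> {s. 0 \<le> s \<and> ereal (\<phi>t s) < rt s} \<and> x \<in> {s. 0 \<le> s \<and> ereal (\<phi> s) > l s})"
      by (rule flat_add[OF fhrt fhl mhrt mhl])
    have "\<exists>x. -1 \<le> x \<and> x \<le> s \<and> G x < 0 \<and> \<not> (x \<in> {s. 0 \<le> s \<and> ereal (\<phi>t s) < rt s} \<and> x \<in> {s. 0 \<le> s \<and> ereal (\<phi> s) > l s})"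
    proof (rule suparg[OF fl])
      show "\<And>x y. x \<le> y \<Longrightarrow> hrt x + hl x \<le> hrt y + hl y" using mhrt mhl by (simp add: add_mono)
      show "\<And>x y. x \<le> y \<Longrightarrow> G x - G y \<le> hrt y + hl y - (hrt x + hl x)"
        unfolding G_def using mhlt mhr by (smt (verit))
      show "-1 \<le> s" using that by simp
      show "0 \<le> G (-1)" using neg[of "-1"] by (simp add: G_def)
      show "G s < 0" using pos[OF that] eqs[OF that] eqst[OF that] \<open>\<not> \<phi> s \<le> \<phi>t s\<close> by (simp add: G_def)
    qed
    then obtain x where x: "G x < 0" "\<not> (0 \<le> x \<and> ereal (\<phi>t x) < rt x \<and> ereal (\<phi> x) > l x)" by auto
    have x0: "0 \<le> x" using x(1) neg[of x] by (cases "x < 0") (auto simp: G_def)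
    have "\<phi>t x < \<phi> x" using x(1) pos[OF x0] eqs[OF x0] eqst[OF x0] by (simp add: G_def)
    then have lt1: "ereal (\<phi>t x) < ereal (\<phi> x)" by simp
    have "ereal (\<phi>t x) < rt x"
      using lt1 bnd[OF x0] rrt[OF x0] by (meson less_le_trans)
    moreover have "ereal (\<phi> x) > l x"
      using lt1 bndt[OF x0] ltl[OF x0] by (metis le_less_trans)
    ultimately have "ereal (\<phi>t x) < rt x" "ereal (\<phi> x) > l x" by auto
    then show False using x(2) x0 by simp
  qed

  define a where "a s = \<eta>l s - \<eta>lt s" for s
  define b where "b s = \<eta>r s - \<eta>rt s" for s
  have ab: "a s \<le> b s" if "0 \<le> s" for s
    using X[OF that] eqs[OF that] eqst[OF that] by (simp add: a_def b_def)

  have A: "\<exists>q. 0 \<le> q \<and> q \<le> s \<and> a q < 0 \<and> ereal (\<phi>t q) \<le> l q" if "0 \<le> s" "a s < 0" for s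
  proof -
    define G where "G x = hl x - hlt x" for x
    have "\<exists>x. -1 \<le> x \<and> x \<le> s \<and> G x < 0 \<and> \<not> (x \<in> {s. 0 \<le> s \<and> ereal (\<phi>t s) > lt s})"
    proof (rule suparg[OF fhlt mhlt])
      show "\<And>x y. x \<le> y \<Longrightarrow> G x - G y \<le> hlt y - hlt x" unfolding G_def using mhl by (smt (verit))
      show "-1 \<le> s" using that by simp
      show "0 \<le> G (-1)" using neg[of "-1"] by (simp add: G_def)
      show "G s < 0" using pos[OF that(1)] that by (simp add: G_def a_def)
    qed
    then obtain x where x: "x \<le> s" "G x < 0" "\<not> (0 \<le> x \<and> ereal (\<phi>t x) > lt x)" by auto
    have x0: "0 \<le> x" using x(2) neg[of x] by (cases "x < 0") (auto simp: G_def)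
    show ?thesis using x x0 pos[OF x0] ltl[OF x0] by (intro exI[of _ x]) (auto simp: G_def a_def)
  qed

  have B: "\<exists>p. 0 \<le> p \<and> p \<le> q \<and> a p < 0 \<and> rt p \<le> ereal (\<phi>t p)"
    if q: "0 \<le> q" "a q < 0" "ereal (\<phi>t q) \<le> l q" for q
  proof -
    have "ereal (\<phi>t q) \<le> ereal (\<phi> q)" using q(3) bnd[OF q(1)] by (meson order.trans)
    then have "\<phi> q = \<phi>t q" using X[OF q(1)] by simp
    then have bq: "b q < 0" using q(2) eqs[OF q(1)] eqst[OF q(1)] by (simp add: a_def b_def)
    define G where "G x = hr x - hrt x" for x
    have "\<exists>x. -1 \<le> x \<and> x \<le> q \<and> G x < 0 \<and> \<not> (x \<in> {s. 0 \<le> s \<and> ereal (\<phi>t s) < rt s})"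
    proof (rule suparg[OF fhrt mhrt])
      show "\<And>x y. x \<le> y \<Longrightarrow> G x - G y \<le> hrt y - hrt x" unfolding G_def using mhr by (smt (verit))
      show "-1 \<le> q" using q by simp
      show "0 \<le> G (-1)" using neg[of "-1"] by (simp add: G_def)
      show "G q < 0" using pos[OF q(1)] bq by (simp add: G_def b_def)
    qed
    then obtain x where x: "x \<le> q" "G x < 0" "\<not> (0 \<le> x \<and> ereal (\<phi>t x) < rt x)" by auto
    have x0: "0 \<le> x" using x(2) neg[of x] by (cases "x < 0") (auto simp: G_def)
    have "b x < 0" using x(2) pos[OF x0] by (simp add: G_def b_def)
    then have "a x < 0" using ab[OF x0] by simp
    then show ?thesis using x x0 by (intro exI[of _ x]) auto
  qed

  define \<Delta> where "\<Delta> = (INF t\<in>{0..}. r t - l t)"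
  have \<Delta>pos: "0 < \<Delta>" using assms(7) by (simp add: \<Delta>_def)
  have \<Delta>le: "\<Delta> \<le> r p - l p" if "0 \<le> p" for p unfolding \<Delta>_def using that by (intro INF_lower) simp
  have lfin: "l p \<noteq> \<infinity>" if "0 \<le> p" for p using assms(1) that unfolding D_minus_def cadlag_in_def by auto
  have lrc: "continuous (at_right p) l" if "0 \<le> p" for p using assms(1) that unfolding D_minus_def cadlag_in_def by auto
  have prc: "continuous (at_right p) \<phi>t" if "0 \<le> p" for p using S2 that unfolding D_def cadlag_in_def by auto
  define qf where "qf p = ereal (\<phi>t p) + - l p" for p
  have qPl: "qf p \<le> 0" if "ereal (\<phi>t p) \<le> l p" for p
    using that unfolding qf_def by (cases "l p") auto
  have qPr: "\<Delta> \<le> qf p" if "0 \<le> p" "rt p \<le> ereal (\<phi>t p)" for p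
  proof -
    have "r p - l p \<le> ereal (\<phi>t p) - l p" using that rrt[OF that(1)] by (intro ereal_minus_mono) auto
    then show ?thesis using \<Delta>le[OF that(1)] unfolding qf_def by (simp add: minus_ereal_def)
  qed

  have anonneg: "0 \<le> a t" if t0: "0 \<le> t" for t
  proof (rule ccontr)
    assume "\<not> 0 \<le> a t"
    define C where "C = {s. 0 \<le> s \<and> a s < 0 \<and> (ereal (\<phi>t s) \<le> l s \<or> rt s \<le> ereal (\<phi>t s))}"
    obtain q0 where "0 \<le> q0" "a q0 < 0" "ereal (\<phi>t q0) \<le> l q0" using A[of t] t0 \<open>\<not> 0 \<le> a t\<close> by force
    then have Cne: "C \<noteq> {}" by (auto simp: C_def)
    have Cbdd: "bdd_below C" unfolding C_def by (rule bdd_belowI[of _ 0]) auto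
    define s0 where "s0 = Inf C"
    have s0: "0 \<le> s0" unfolding s0_def using Cne by (intro cInf_greatest) (auto simp: C_def)
    have near: "(\<exists>q. s0 \<le> q \<and> q < s0 + h \<and> qf q \<le> 0) \<and> (\<exists>p. s0 \<le> p \<and> p < s0 + h \<and> \<Delta> \<le> qf p)"
      if "0 < h" for h
    proof -
      have "Inf C < s0 + h" using that by (simp add: s0_def)
      then obtain c where c: "c \<in> C" "c < s0 + h" using cInf_less_iff[OF Cne Cbdd] by blast
      then obtain q where q: "0 \<le> q" "q \<le> c" "a q < 0" "ereal (\<phi>t q) \<le> l q" using A by (auto simp: C_def)
      then have qC: "q \<in> C" by (auto simp: C_def)
      then have "s0 \<le> q" unfolding s0_def using Cbdd by (rule cInf_lower)
      obtain p where p: "0 \<le> p" "p \<le> q" "a p < 0" "rt p \<le> ereal (\<phi>t p)" using B[OF q(1,3,4)] by blast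
      then have "p \<in> C" by (auto simp: C_def)
      then have "s0 \<le> p" unfolding s0_def using Cbdd by (rule cInf_lower)
      have "s0 \<le> q \<and> q < s0 + h \<and> qf q \<le> 0" using \<open>s0 \<le> q\<close> q c qPl[OF q(4)] by simp
      moreover have "s0 \<le> p \<and> p < s0 + h \<and> \<Delta> \<le> qf p" using \<open>s0 \<le> p\<close> p q c qPr[OF p(1,4)] by simp
      ultimately show ?thesis by blast
    qed
    have t1: "((\<lambda>p. ereal (\<phi>t p)) \<longlongrightarrow> ereal (\<phi>t s0)) (at_right s0)"
      using prc[OF s0] unfolding continuous_within by (intro tendsto_intros) simp
    have t2: "((\<lambda>p. - l p) \<longlongrightarrow> - l s0) (at_right s0)"
      using lrc[OF s0] unfolding continuous_within by (intro tendsto_uminus_ereal) simp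
    have lim: "(qf \<longlongrightarrow> qf s0) (at_right s0)"
      unfolding qf_def using lfin[OF s0] by (intro tendsto_add_ereal_nonneg[OF _ _ t1 t2]) auto
    show False
    proof (cases "qf s0 < \<Delta>")
      case True
      have "\<forall>\<^sub>F p in at_right s0. qf p < \<Delta>" using lim True by (rule order_tendstoD)
      then obtain h where h: "0 < h" "\<And>p. s0 < p \<Longrightarrow> p < s0 + h \<Longrightarrow> qf p < \<Delta>"
        unfolding eventually_at_right_field by (metis add.commute diff_add_cancel diff_gt_0_iff_gt)
      obtain p where "s0 \<le> p" "p < s0 + h" "\<Delta> \<le> qf p" using near[OF h(1)] by blast
      then show False using h(2)[of p] True by (cases "p = s0") auto
    next
      case False
      then have "0 < qf s0" using \<Delta>pos by auto
      have "\<forall>\<^sub>F p in at_right s0. 0 < qf p" using lim \<open>0 < qf s0\<close> by (rule order_tendstoD)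
      then obtain h where h: "0 < h" "\<And>p. s0 < p \<Longrightarrow> p < s0 + h \<Longrightarrow> 0 < qf p"
        unfolding eventually_at_right_field by (metis add.commute diff_add_cancel diff_gt_0_iff_gt)
      obtain q where "s0 \<le> q" "q < s0 + h" "qf q \<le> 0" using near[OF h(1)] by blast
      then show False using h(2)[of q] \<open>0 < qf s0\<close> by (cases "q = s0") auto
    qed
  qed
  show ?thesis
  proof (intro allI impI conjI)
    fix t :: real assume t: "0 \<le> t"
    show "\<eta>lt t \<le> \<eta>l t" using anonneg[OF t] by (simp add: a_def)
    show "\<eta>rt t \<le> \<eta>r t" using anonneg[OF t] ab[OF t] by (simp add: a_def b_def)
  qed
qed

end
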